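(* Let $n\ge1$ and let $\mathcal B$ be a finite abstract $\mathfrak q_n$-crystal. Then its character $\mathrm{ch}(\mathcal B)=\sum_{b\in\mathcal B}x_1^{\mathrm{wt}(b)_1}\cdots x_n^{\mathrm{wt}(b)_n}$ lies in $\Gamma_n$.
   Context: An abstract $\mathfrak{gl}_n$-crystal is a set $\mathcal B$ with $\mathrm{wt}:\mathcal B\to\mathbb{Z}_{\ge0}^n$ and $e_i,f_i:\mathcal B\to\mathcal B\sqcup\{0\}$ ($i\in[n-1]$) such that $e_i(b)=c\iff f_i(c)=b$, in which case $\mathrm{wt}(c)=\mathrm{wt}(b)+\mathbf e_i-\mathbf e_{i+1}$, and $\varepsilon_i(b)=\max\{k:e_i^k(b)\ne0\}$, $\varphi_i(b)=\max\{k:f_i^k(b)\ne0\}$ are finite with $\varphi_i(b)-\varepsilon_i(b)=\mathrm{wt}(b)_i-\mathrm{wt}(b)_{i+1}$. For $n\ge2$ an abstract $\mathfrak q_n$-crystal is an abstract $\mathfrak{gl}_n$-crystal with maps $e_{\bar1},f_{\bar1}:\mathcal B\to\mathcal B\sqcup\{0\}$ such that: $e_{\bar1}(b)=c\iff f_{\bar1}(c)=b$, in which case $\mathrm{wt}(b)=\mathrm{wt}(c)+\mathbf e_2-\mathbf e_1$ and $\varepsilon_i(b)=\varepsilon_i(c)$, $\varphi_i(b)=\varphi_i(c)$ for $3\le i\le n-1$; $e_{\bar1},f_{\bar1}$ commute with $e_i,f_i$ for $3\le i\le n-1$ (all operators send $0$ to $0$); and, with $\varepsilon_{\bar1}(b)=\max\{k:e_{\bar1}^k(b)\ne0\}$,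 $\varphi_{\bar1}(b)=\max\{k:f_{\bar1}^k(b)\neq0\}$, one has $\varepsilon_{\bar1}(b)+\varphi_{\bar1}(b)\le1$ with equality if $\mathrm{wt}(b)_1\ne0$ or $\mathrm{wt}(b)_2\ne0$. An abstract $\mathfrak q_1$-crystal is any set with a weight map to $\mathbb{Z}_{\ge0}$. $\Lambda_n$ is the ring of symmetric polynomials in $\mathbb{Z}[x_1,\dots,x_n]$; for $n\ge2$, $\Gamma_n$ is the subring of $f\in\Lambda_n$ with $f(x_1,-x_1,x_3,\dots,x_n)\in\mathbb{Z}[x_3,\dots,x_n]$, and $\Gamma_1=\Lambda_1$. *)

theory Defs
  imports "HOL-Combinatorics.Permutations"
begin

text \<open>The value None plays the role of 0.
  Weights are functions nat => nat, of which only the entries 1..n matter.\<close>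

definition opt_iter :: "('b \<Rightarrow> 'b option) \<Rightarrow> nat \<Rightarrow> 'b \<Rightarrow> 'b option" where
  "opt_iter g k b = ((\<lambda>y. Option.bind y g) ^^ k) (Some b)"

definition str_len :: "('b \<Rightarrow> 'b option) \<Rightarrow> 'b \<Rightarrow> nat" where
  "str_len g b = Max {k. opt_iter g k b \<noteq> None}"

definition str_finite :: "('b \<Rightarrow> 'b option) \<Rightarrow> 'b \<Rightarrow> bool" where
  "str_finite g b \<longleftrightarrow> finite {k. opt_iter g k b \<noteq> None}"

definition maps_into :: "'b set \<Rightarrow> ('b \<Rightarrow> 'b option) \<Rightarrow> bool" where
  "maps_into B g \<longleftrightarrow> (\<forall>b\<in>B. \<forall>c. g b = Some c \<longrightarrow> c \<in> B)"

definition gl_crystal ::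
  "nat \<Rightarrow> 'b set \<Rightarrow> ('b \<Rightarrow> nat \<Rightarrow> nat) \<Rightarrow> (nat \<Rightarrow> 'b \<Rightarrow> 'b option) \<Rightarrow> (nat \<Rightarrow> 'b \<Rightarrow> 'b option) \<Rightarrow> bool"
  where
  "gl_crystal n B wt e f \<longleftrightarrow>
    (\<forall>i\<in>{1..<n}.
       maps_into B (e i) \<and> maps_into B (f i) \<and>
       (\<forall>b\<in>B. \<forall>c\<in>B. e i b = Some c \<longleftrightarrow> f i c = Some b) \<and>
       (\<forall>b\<in>B. \<forall>c\<in>B. e i b = Some c \<longrightarrow>
          (\<forall>j\<in>{1..n}. int (wt c j) = int (wt b j) + (if j = i then 1 else 0)
                                                 - (if j = i + 1 then 1 else 0))) \<and>
       (\<forall>b\<in>B. str_finite (e i) b \<and> str_finite (f i) b \<and>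
          int (str_len (f i) b) - int (str_len (e i) b) = int (wt b i) - int (wt b (i + 1))))"

definition q_crystal ::
  "nat \<Rightarrow> 'b set \<Rightarrow> ('b \<Rightarrow> nat \<Rightarrow> nat) \<Rightarrow> (nat \<Rightarrow> 'b \<Rightarrow> 'b option) \<Rightarrow> (nat \<Rightarrow> 'b \<Rightarrow> 'b option)
     \<Rightarrow> ('b \<Rightarrow> 'b option) \<Rightarrow> ('b \<Rightarrow> 'b option) \<Rightarrow> bool"
  where
  "q_crystal n B wt e f eb fb \<longleftrightarrow>
    (n \<ge> 2 \<longrightarrow>
      gl_crystal n B wt e f \<and>
      maps_into B eb \<and> maps_into B fb \<and>
      (\<forall>b\<in>B. \<forall>c\<in>B. eb b = Some c \<longleftrightarrow> fb c = Some b) \<and>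
      (\<forall>b\<in>B. \<forall>c\<in>B. eb b = Some c \<longrightarrow>
          (\<forall>j\<in>{1..n}. int (wt b j) = int (wt c j) + (if j = 2 then 1 else 0)
                                                 - (if j = 1 then 1 else 0)) \<and>
          (\<forall>i\<in>{3..<n}. str_len (e i) b = str_len (e i) c \<and> str_len (f i) b = str_len (f i) c)) \<and>
      (\<forall>i\<in>{3..<n}. \<forall>b\<in>B.
          Option.bind (eb b) (e i) = Option.bind (e i b) eb \<and>
          Option.bind (eb b) (f i) = Option.bind (f i b) eb \<and>
          Option.bind (fb b) (e i) = Option.bind (e i b) fb \<and>
          Option.bind (fb b) (f i) = Option.bind (f i b) fb) \<and>
      (\<forall>b\<in>B. str_finite eb b \<and> str_finite fb b \<and>
          str_len eb b + str_len fb b \<le> 1 \<and>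
          ((wt b 1 \<noteq> 0 \<or> wt b 2 \<noteq> 0) \<longrightarrow> str_len eb b + str_len fb b = 1)))"

definition character :: "nat \<Rightarrow> 'b set \<Rightarrow> ('b \<Rightarrow> nat \<Rightarrow> nat) \<Rightarrow> (nat \<Rightarrow> int) \<Rightarrow> int" where
  "character n B wt x = (\<Sum>b\<in>B. \<Prod>i=1..n. x i ^ wt b i)"

text \<open>Polynomial functions Z^n -> Z (over the infinite domain Z these determine
  the polynomial), symmetric in x_1..x_n.\<close>
definition in_Lambda :: "nat \<Rightarrow> ((nat \<Rightarrow> int) \<Rightarrow> int) \<Rightarrow> bool" where
  "in_Lambda n F \<longleftrightarrow> (\<forall>x \<sigma>. \<sigma> permutes {1..n} \<longrightarrow> F (x \<circ> \<sigma>) = F x)"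

definition in_Gamma :: "nat \<Rightarrow> ((nat \<Rightarrow> int) \<Rightarrow> int) \<Rightarrow> bool" where
  "in_Gamma n F \<longleftrightarrow> in_Lambda n F \<and>
     (n \<ge> 2 \<longrightarrow> (\<forall>x t. F (x(1 := t, 2 := -t)) = F (x(1 := 0, 2 := 0))))"

end

theory Submission
  imports Defs
begin

lemma oi_0[simp]: "opt_iter g 0 b = Some b"
  by (simp add: opt_iter_def)

lemma oi_Suc: "opt_iter g (Suc k) b = Option.bind (opt_iter g k b) g"
  by (simp add: opt_iter_def)

lemma oi_None: "((\<lambda>y. Option.bind y (g::'a \<Rightarrow> 'a option)) ^^ k) None = None"
  by (induction k) auto

lemma oi_Suc': "opt_iter g (Suc k) b = Option.bind (g b) (opt_iter g k)"
proof -
  have "opt_iter g (Suc k) b = ((\<lambda>y. Option.bind y g) ^^ k) (g b)"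
    unfolding opt_iter_def funpow_Suc_right by simp
  then show ?thesis by (cases "g b") (auto simp: oi_None opt_iter_def)
qed

lemma oi_1[simp]: "opt_iter g (Suc 0) b = g b"
  by (simp add: oi_Suc)

lemma oi_down: "opt_iter g k b \<noteq> None \<Longrightarrow> j \<le> k \<Longrightarrow> opt_iter g j b \<noteq> None"
proof (induction k)
  case 0 then show ?case by simp
next
  case (Suc k)
  then show ?case
  proof (cases "j = Suc k")
    case False
    have "opt_iter g k b \<noteq> None"
      using Suc.prems(1) by (cases "opt_iter g k b") (auto simp: oi_Suc)
    then show ?thesis using Suc False by auto
  qed simp
qed

lemma str_len_in:
  assumes "str_finite g b" and "k \<le> str_len g b"
  shows "opt_iter g k b \<noteq> None"
proof -
  have "str_len g b \<in> {k. opt_iter g k b \<noteq> None}"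
    unfolding str_len_def using assms(1) unfolding str_finite_def
    by (intro Max_in) (auto intro: exI[of _ 0])
  then show ?thesis using oi_down[of g "str_len g b" b k] assms(2) by blast
qed

lemma str_len_ge:
  assumes "str_finite g b" and "opt_iter g k b \<noteq> None"
  shows "k \<le> str_len g b"
  using assms unfolding str_len_def str_finite_def by (intro Max_ge) auto

lemma str_len_0:
  assumes "str_finite g b"
  shows "str_len g b = 0 \<longleftrightarrow> g b = None"
proof
  assume "str_len g b = 0"
  then show "g b = None" using str_len_ge[OF assms, of 1] by (cases "g b") auto
next
  assume "g b = None"
  then show "str_len g b = 0" using str_len_in[OF assms, of 1]
    by (cases "str_len g b") auto
qed

lemma iter_rev:
  assumes mi: "maps_into B g" and rel: "\<forall>b\<in>B. \<forall>c\<in>B. h b = Some c \<longleftrightarrow> g c = Some b"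
  shows "b \<in> B \<Longrightarrow> opt_iter g k b = Some c \<Longrightarrow> c \<in> B \<and> opt_iter h k c = Some b"
proof (induction k arbitrary: c)
  case 0 then show ?case by simp
next
  case (Suc k)
  then obtain d where d: "opt_iter g k b = Some d" "g d = Some c"
    by (cases "opt_iter g k b") (auto simp: oi_Suc)
  with Suc have dB: "d \<in> B" "opt_iter h k d = Some b" by auto
  with d mi have cB: "c \<in> B" unfolding maps_into_def by auto
  with rel dB d have "h c = Some d" by auto
  with dB cB show ?case by (simp add: oi_Suc')
qed

lemma iter_wt:
  assumes mi: "maps_into B g"
    and W: "\<forall>b\<in>B. \<forall>c. g b = Some c \<longrightarrow> W c = W b + (\<delta>::int)"
  shows "b \<in> B \<Longrightarrow> opt_iter g k b = Some c \<Longrightarrow> W c = W b + int k * \<delta>"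
proof (induction k arbitrary: c)
  case 0 then show ?case by simp
next
  case (Suc k)
  then obtain d where d: "opt_iter g k b = Some d" "g d = Some c"
    by (cases "opt_iter g k b") (auto simp: oi_Suc)
  have "b \<in> B \<Longrightarrow> opt_iter g k b = Some d \<Longrightarrow> d \<in> B"
  proof (induction k arbitrary: d)
    case 0 then show ?case by simp
  next
    case (Suc k)
    then obtain d' where "opt_iter g k b = Some d'" "g d' = Some d"
      by (cases "opt_iter g k b") (auto simp: oi_Suc)
    with Suc mi show ?case unfolding maps_into_def by auto
  qed
  with Suc d W have "W d = W b + int k * \<delta>" "W c = W d + \<delta>" by auto
  then show ?case by (simp add: algebra_simps)
qed

lemma sum_invol_zero:
  fixes g :: "'a \<Rightarrow> int"
  assumes "\<forall>b\<in>S. \<iota> b \<in> S \<and> \<iota> (\<iota> b) = b \<and> g (\<iota> b) = - g b"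
  shows "sum g S = 0"
proof -
  have bij: "bij_betw \<iota> S S"
    by (rule bij_betw_byWitness[where f'=\<iota>]) (use assms in auto)
  have "sum g S = sum (g \<circ> \<iota>) S"
    using sum.reindex_bij_betw[OF bij, of g] by simp
  also have "\<dots> = - sum g S"
    using assms by (simp add: sum_negf[symmetric])
  finally show ?thesis by simp
qed


lemma prod_split12:
  fixes h :: "nat \<Rightarrow> int"
  assumes "n \<ge> 2"
  shows "prod h {1..n} = h 1 * h 2 * prod h {3..n}"
proof -
  have "{1..n} = insert 1 (insert 2 {3..n})" using assms by auto
  then show ?thesis by simp
qed

lemma adj_sym:
  assumes gl: "gl_crystal n B wt e f" and fin: "finite B" and i: "1 \<le> i" "i < n"
  shows "character n B wt (x \<circ> Transposition.transpose i (Suc i)) = character n B wt x"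
proof -
  let ?E = "e i" and ?F = "f i"
  let ?\<tau> = "Transposition.transpose i (Suc i)"
  have iI: "i \<in> {1..<n}" using i by auto
  have miE: "maps_into B ?E" and miF: "maps_into B ?F"
    and rel: "\<forall>b\<in>B. \<forall>c\<in>B. ?E b = Some c \<longleftrightarrow> ?F c = Some b"
    and wtE: "\<forall>b\<in>B. \<forall>c\<in>B. ?E b = Some c \<longrightarrow>
          (\<forall>j\<in>{1..n}. int (wt c j) = int (wt b j) + (if j = i then 1 else 0)
                                                 - (if j = i + 1 then 1 else 0))"
    and sf: "\<forall>b\<in>B. str_finite ?E b \<and> str_finite ?F b \<and>
          int (str_len ?F b) - int (str_len ?E b) = int (wt b i) - int (wt b (i + 1))"
    using bspec[OF gl[unfolded gl_crystal_def] iI] by blast+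
  have rel': "\<forall>b\<in>B. \<forall>c\<in>B. ?F b = Some c \<longleftrightarrow> ?E c = Some b" using rel by blast
  define \<sigma> where "\<sigma> b = (if wt b (i+1) \<le> wt b i then the (opt_iter ?F (wt b i - wt b (i+1)) b)
       else the (opt_iter ?E (wt b (i+1) - wt b i) b))" for b
  have key: "\<sigma> b \<in> B \<and> (\<forall>j\<in>{1..n}. wt (\<sigma> b) j = wt b (?\<tau> j)) \<and> \<sigma> (\<sigma> b) = b"
    if bB: "b \<in> B" for b
  proof (cases "wt b (i+1) \<le> wt b i")
    case True
    define k where "k = wt b i - wt b (i+1)"
    have "int (str_len ?F b) - int (str_len ?E b) = int (wt b i) - int (wt b (i + 1))"
      using sf bB by blast
    then have "k \<le> str_len ?F b" using True unfolding k_def by linarith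
    then obtain c where c: "opt_iter ?F k b = Some c"
      using str_len_in[of ?F b k] sf bB by auto
    have sb: "\<sigma> b = c" using True c unfolding \<sigma>_def k_def by simp
    have cB: "c \<in> B" and bk: "opt_iter ?E k c = Some b"
      using iter_rev[OF miF rel bB c] by auto
    have W: "int (wt c j) = int (wt b j) + int k * ((if j = i + 1 then 1 else 0) - (if j = i then 1 else 0))"
      if j: "j \<in> {1..n}" for j
    proof (rule iter_wt[OF miF _ bB c, where W = "\<lambda>b. int (wt b j)"])
      show "\<forall>b\<in>B. \<forall>c. ?F b = Some c \<longrightarrow> int (wt c j) = int (wt b j) + ((if j = i + 1 then 1 else 0) - (if j = i then 1 else 0))"
      proof (intro ballI allI impI)
        fix b' c' assume b'B: "b' \<in> B" and Fb: "?F b' = Some c'"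
        have c'B: "c' \<in> B" using miF b'B Fb unfolding maps_into_def by blast
        have Ec: "?E c' = Some b'" using rel' b'B c'B Fb by blast
        have "int (wt b' j) = int (wt c' j) + (if j = i then 1 else 0) - (if j = i + 1 then 1 else 0)"
          by (rule wtE[rule_format, OF c'B b'B Ec j])
        then show "int (wt c' j) = int (wt b' j) + ((if j = i + 1 then 1 else 0) - (if j = i then 1 else 0))"
          by linarith
      qed
    qed
    have n1: "i + 1 \<in> {1..n}" "i \<in> {1..n}" using i by auto
    have wi: "wt c i = wt b (i+1)" using W[OF n1(2)] True unfolding k_def by simp
    have wi1: "wt c (i+1) = wt b i" using W[OF n1(1)] True unfolding k_def by simp
    have wt_ok: "\<forall>j\<in>{1..n}. wt c j = wt b (?\<tau> j)"
    proof
      fix j assume j: "j \<in> {1..n}"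
      show "wt c j = wt b (?\<tau> j)"
        using W[OF j] wi wi1 by (auto simp: Transposition.transpose_def)
    qed
    have "\<sigma> c = b"
    proof (cases "k = 0")
      case True
      then have "c = b" using c by simp
      then show ?thesis using sb by simp
    next
      case False
      then have "\<not> wt c (i+1) \<le> wt c i" using wi wi1 True unfolding k_def by simp
      moreover have "wt c (i+1) - wt c i = k" using wi wi1 unfolding k_def by simp
      ultimately show ?thesis using bk unfolding \<sigma>_def by simp
    qed
    then show ?thesis using sb cB wt_ok by simp
  next
    case False
    define k where "k = wt b (i+1) - wt b i"
    have "int (str_len ?F b) - int (str_len ?E b) = int (wt b i) - int (wt b (i + 1))"
      using sf bB by blast
    then have "k \<le> str_len ?E b" using False unfolding k_def by linarith
    then obtain c where c: "opt_iter ?E k b = Some c"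
      using str_len_in[of ?E b k] sf bB by auto
    have sb: "\<sigma> b = c" using False c unfolding \<sigma>_def k_def by simp
    have cB: "c \<in> B" and bk: "opt_iter ?F k c = Some b"
      using iter_rev[OF miE rel' bB c] by auto
    have W: "int (wt c j) = int (wt b j) + int k * ((if j = i then 1 else 0) - (if j = i + 1 then 1 else 0))"
      if j: "j \<in> {1..n}" for j
    proof (rule iter_wt[OF miE _ bB c, where W = "\<lambda>b. int (wt b j)"])
      show "\<forall>b\<in>B. \<forall>c. ?E b = Some c \<longrightarrow> int (wt c j) = int (wt b j) + ((if j = i then 1 else 0) - (if j = i + 1 then 1 else 0))"
      proof (intro ballI allI impI)
        fix b' c' assume b'B: "b' \<in> B" and Eb: "?E b' = Some c'"
        have c'B: "c' \<in> B" using miE b'B Eb unfolding maps_into_def by blast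
        have "int (wt c' j) = int (wt b' j) + (if j = i then 1 else 0) - (if j = i + 1 then 1 else 0)"
          by (rule wtE[rule_format, OF b'B c'B Eb j])
        then show "int (wt c' j) = int (wt b' j) + ((if j = i then 1 else 0) - (if j = i + 1 then 1 else 0))"
          by linarith
      qed
    qed
    have n1: "i + 1 \<in> {1..n}" "i \<in> {1..n}" using i by auto
    have wi: "wt c i = wt b (i+1)" using W[OF n1(2)] False unfolding k_def by simp
    have wi1: "wt c (i+1) = wt b i" using W[OF n1(1)] False unfolding k_def by simp
    have wt_ok: "\<forall>j\<in>{1..n}. wt c j = wt b (?\<tau> j)"
    proof
      fix j assume j: "j \<in> {1..n}"
      show "wt c j = wt b (?\<tau> j)"
        using W[OF j] wi wi1 by (auto simp: Transposition.transpose_def)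
    qed
    have "wt c (i+1) \<le> wt c i" "wt c i - wt c (i+1) = k" using wi wi1 False unfolding k_def by auto
    then have "\<sigma> c = b" using bk unfolding \<sigma>_def by simp
    then show ?thesis using sb cB wt_ok by simp
  qed
  have bij: "bij_betw \<sigma> B B"
    by (rule bij_betw_byWitness[where f'=\<sigma>]) (use key in auto)
  have tt: "?\<tau> (?\<tau> j) = j" for j by (simp add: Transposition.transpose_def)
  have tp: "bij_betw ?\<tau> {1..n} {1..n}"
    by (rule permutes_imp_bij[OF permutes_swap_id]) (use i in auto)
  have "character n B wt (x \<circ> ?\<tau>) = (\<Sum>b\<in>B. \<Prod>j=1..n. x j ^ wt (\<sigma> b) j)"
    unfolding character_def
  proof (rule sum.cong[OF refl])
    fix b assume bB: "b \<in> B"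
    have "(\<Prod>j=1..n. (x \<circ> ?\<tau>) j ^ wt b j) = (\<Prod>j=1..n. x (?\<tau> j) ^ wt b (?\<tau> (?\<tau> j)))"
      by (simp add: tt)
    also have "\<dots> = (\<Prod>j=1..n. x j ^ wt b (?\<tau> j))"
      using prod.reindex_bij_betw[OF tp, of "\<lambda>j. x j ^ wt b (?\<tau> j)"] by simp
    also have "\<dots> = (\<Prod>j=1..n. x j ^ wt (\<sigma> b) j)"
      using key[OF bB] by (intro prod.cong) auto
    finally show "(\<Prod>j=1..n. (x \<circ> ?\<tau>) j ^ wt b j) = (\<Prod>j=1..n. x j ^ wt (\<sigma> b) j)" .
  qed
  also have "\<dots> = character n B wt x"
    unfolding character_def
    using sum.reindex_bij_betw[OF bij, of "\<lambda>b. \<Prod>j=1..n. x j ^ wt b j"] by simp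
  finally show ?thesis .
qed


lemma perm_closure:
  fixes F :: "(nat \<Rightarrow> int) \<Rightarrow> int"
  assumes adj: "\<And>i x. 1 \<le> i \<Longrightarrow> i < n \<Longrightarrow> F (x \<circ> Transposition.transpose i (Suc i)) = F x"
    and p: "p permutes {1..n}"
  shows "F (x \<circ> p) = F x"
proof -
  have L: "set xs \<subseteq> {1..<n} \<Longrightarrow> \<forall>x. F (x \<circ> apply_adj_transps xs) = F x" for xs
  proof (induction xs)
    case Nil then show ?case by simp
  next
    case (Cons a xs)
    show ?case
    proof
      fix x
      have "F (x \<circ> apply_adj_transps (a # xs)) = F ((x \<circ> Transposition.transpose a (Suc a)) \<circ> apply_adj_transps xs)"
        by (simp add: o_assoc)
      also have "\<dots> = F (x \<circ> Transposition.transpose a (Suc a))"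
      proof -
        have sx: "set xs \<subseteq> {1..<n}" using Cons.prems by simp
        show ?thesis using Cons.IH[OF sx] by blast
      qed
      also have "\<dots> = F x" using Cons.prems by (intro adj) auto
      finally show "F (x \<circ> apply_adj_transps (a # xs)) = F x" .
    qed
  qed
  have T: "F (x \<circ> Transposition.transpose a b) = F x" if "a \<in> {1..n}" "b \<in> {1..n}" for a b x
  proof -
    have lt: "F (x \<circ> Transposition.transpose a b) = F x" if "a < b" "a \<in> {1..n}" "b \<in> {1..n}" for a b x
    proof -
      have "set (adj_transp_seq a b) \<subseteq> {1..<n}" using that set_adj_transp_seq[of a b] by auto
      then show ?thesis using L adj_transp_seq_correct[OF \<open>a < b\<close>] by metis
    qed
    consider "a < b" | "a = b" | "b < a" by arith
    then show ?thesis
    proof cases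
      case 1 then show ?thesis using lt that by blast
    next
      case 2 then show ?thesis by simp
    next
      case 3 then show ?thesis using lt[of b a] that by (simp add: transpose_commute)
    qed
  qed
  have "\<forall>x. F (x \<circ> p) = F x"
    using p finite_atLeastAtMost
  proof (induction rule: permutes_induct)
    case id then show ?case by simp
  next
    case (swap a b p)
    show ?case
    proof
      fix x
      have "F (x \<circ> (Transposition.transpose a b \<circ> p)) = F ((x \<circ> Transposition.transpose a b) \<circ> p)"
        by (simp add: o_assoc)
      also have "\<dots> = F (x \<circ> Transposition.transpose a b)" using swap.IH by blast
      also have "\<dots> = F x" using swap.hyps T by blast
      finally show "F (x \<circ> (Transposition.transpose a b \<circ> p)) = F x" .
    qed
  qed
  then show ?thesis by blast
qed


lemma gamma_part:
  assumes q: "q_crystal n B wt e f eb fb" and n2: "n \<ge> 2" and fin: "finite B"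
  shows "character n B wt (x(1 := t, 2 := - t)) = character n B wt (x(1 := 0, 2 := 0))"
proof -
  note Q = mp[OF q[unfolded q_crystal_def] n2]
  have mie: "maps_into B eb" using Q by blast
  have mif: "maps_into B fb" using Q by blast
  have relb: "\<forall>b\<in>B. \<forall>c\<in>B. eb b = Some c \<longleftrightarrow> fb c = Some b" using Q by blast
  have wtb: "\<forall>b\<in>B. \<forall>c\<in>B. eb b = Some c \<longrightarrow>
          (\<forall>j\<in>{1..n}. int (wt b j) = int (wt c j) + (if j = 2 then 1 else 0)
                                                 - (if j = 1 then 1 else 0))"
    using Q by blast
  have sfb: "\<forall>b\<in>B. str_finite eb b \<and> str_finite fb b \<and>
          str_len eb b + str_len fb b \<le> 1 \<and>
          ((wt b 1 \<noteq> 0 \<or> wt b 2 \<noteq> 0) \<longrightarrow> str_len eb b + str_len fb b = 1)"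
    using Q by blast
  define y where "y = x(1 := t, 2 := - t)"
  define y0 where "y0 = x(1 := (0::int), 2 := 0)"
  define G where "G b = (\<Prod>j=1..n. y j ^ wt b j)" for b
  define G0 where "G0 b = (\<Prod>j=1..n. y0 j ^ wt b j)" for b
  have n12: "1 \<in> {1..n}" "2 \<in> {1..n}" using n2 by auto
  have neg: "G c = - G b" if cB: "c \<in> B" and bB: "b \<in> B" and ec: "eb c = Some b" for b c
  proof -
    have W: "\<forall>j\<in>{1..n}. int (wt c j) = int (wt b j) + (if j = 2 then 1 else 0) - (if j = 1 then 1 else 0)"
      using wtb cB bB ec by blast
    have w1: "wt b 1 = Suc (wt c 1)" using bspec[OF W n12(1)] by simp
    have w2: "wt c 2 = Suc (wt b 2)" using bspec[OF W n12(2)] by simp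
    have R: "(\<Prod>j=3..n. y j ^ wt c j) = (\<Prod>j=3..n. y j ^ wt b j)"
    proof (rule prod.cong[OF refl])
      fix j assume j: "j \<in> {3..n}"
      then have jj: "j \<in> {1..n}" "j \<noteq> 1" "j \<noteq> 2" by auto
      then have "wt c j = wt b j" using bspec[OF W jj(1)] by simp
      then show "y j ^ wt c j = y j ^ wt b j" by simp
    qed
    have y12: "y 1 = t" "y 2 = - t" unfolding y_def by auto
    show ?thesis
      unfolding G_def prod_split12[OF n2, of "\<lambda>j. y j ^ wt c j"] prod_split12[OF n2, of "\<lambda>j. y j ^ wt b j"]
      using R y12 w1 w2 by (simp add: algebra_simps)
  qed
  define \<iota> where "\<iota> b = (case fb b of Some c \<Rightarrow> c | None \<Rightarrow> the (eb b))" for b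
  define Z where "Z = {b\<in>B. wt b 1 = 0 \<and> wt b 2 = 0}"
  define S where "S = {b\<in>B. \<not> (wt b 1 = 0 \<and> wt b 2 = 0)}"
  have BZS: "B = Z \<union> S" "Z \<inter> S = {}" unfolding Z_def S_def by auto
  have finZS: "finite Z" "finite S" using fin unfolding Z_def S_def by auto
  have invol: "\<forall>b\<in>S. \<iota> b \<in> S \<and> \<iota> (\<iota> b) = b \<and> G (\<iota> b) = - G b"
  proof
    fix b assume bS: "b \<in> S"
    then have bB: "b \<in> B" and bnz: "wt b 1 \<noteq> 0 \<or> wt b 2 \<noteq> 0" unfolding S_def by auto
    have sb: "str_finite eb b" "str_finite fb b" "str_len eb b + str_len fb b = 1"
      using sfb bB bnz by auto
    show "\<iota> b \<in> S \<and> \<iota> (\<iota> b) = b \<and> G (\<iota> b) = - G b"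
    proof (cases "fb b")
      case (Some c)
      have cB: "c \<in> B" using mif bB Some unfolding maps_into_def by blast
      have ec: "eb c = Some b" using relb bB cB Some by blast
      have W: "\<forall>j\<in>{1..n}. int (wt c j) = int (wt b j) + (if j = 2 then 1 else 0) - (if j = 1 then 1 else 0)"
        using wtb cB bB ec by blast
      have w2: "wt c 2 = Suc (wt b 2)" using bspec[OF W n12(2)] by simp
      have sc: "str_finite eb c" "str_finite fb c" "str_len eb c + str_len fb c \<le> 1"
        using sfb cB by auto
      have "str_len eb c \<noteq> 0" using str_len_0[OF sc(1)] ec by simp
      then have "str_len fb c = 0" using sc(3) by simp
      then have fc: "fb c = None" using str_len_0[OF sc(2)] by simp
      have ic: "\<iota> c = b" unfolding \<iota>_def using fc ec by simp
      have ib: "\<iota> b = c" unfolding \<iota>_def using Some by simp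
      have "c \<in> S" unfolding S_def using cB w2 by simp
      then show ?thesis using ib ic neg[OF cB bB ec] by simp
    next
      case None
      then have "str_len fb b = 0" using str_len_0[OF sb(2)] by simp
      then have "str_len eb b \<noteq> 0" using sb(3) by simp
      then obtain c where ec: "eb b = Some c" using str_len_0[OF sb(1)] by auto
      have cB: "c \<in> B" using mie bB ec unfolding maps_into_def by blast
      have fc: "fb c = Some b" using relb bB cB ec by blast
      have W: "\<forall>j\<in>{1..n}. int (wt b j) = int (wt c j) + (if j = 2 then 1 else 0) - (if j = 1 then 1 else 0)"
        using wtb cB bB ec by blast
      have w1: "wt c 1 = Suc (wt b 1)" using bspec[OF W n12(1)] by simp
      have ic: "\<iota> c = b" unfolding \<iota>_def using fc by simp
      have ib: "\<iota> b = c" unfolding \<iota>_def using None ec by simp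
      have "c \<in> S" unfolding S_def using cB w1 by simp
      then show ?thesis using ib ic neg[OF bB cB ec] by simp
    qed
  qed
  have S0: "sum G S = 0" by (rule sum_invol_zero[OF invol])
  have S00: "sum G0 S = 0"
  proof (rule sum.neutral, rule ballI)
    fix b assume "b \<in> S"
    then have bnz: "wt b 1 \<noteq> 0 \<or> wt b 2 \<noteq> 0" unfolding S_def by auto
    have "y0 1 = 0" "y0 2 = 0" unfolding y0_def by auto
    then show "G0 b = 0" unfolding G0_def prod_split12[OF n2] using bnz by auto
  qed
  have ZZ: "sum G Z = sum G0 Z"
  proof (rule sum.cong[OF refl])
    fix b assume "b \<in> Z"
    then have z: "wt b 1 = 0" "wt b 2 = 0" unfolding Z_def by auto
    show "G b = G0 b" unfolding G_def G0_def
    proof (rule prod.cong[OF refl])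
      fix j assume "j \<in> {1..n}"
      show "y j ^ wt b j = y0 j ^ wt b j"
        using z unfolding y_def y0_def by (cases "j = 1"; cases "j = 2") auto
    qed
  qed
  have "character n B wt (x(1 := t, 2 := - t)) = sum G B"
    unfolding character_def G_def y_def by simp
  also have "\<dots> = sum G Z + sum G S" using BZS finZS by (simp add: sum.union_disjoint)
  also have "\<dots> = sum G0 Z + sum G0 S" using ZZ S0 S00 by simp
  also have "\<dots> = sum G0 B" using BZS finZS by (simp add: sum.union_disjoint)
  also have "\<dots> = character n B wt (x(1 := 0, 2 := 0))"
    unfolding character_def G0_def y0_def by simp
  finally show ?thesis .
qed

theorem proposition2p5:
  fixes n :: nat and B :: "'b set" and wt :: "'b \<Rightarrow> nat \<Rightarrow> nat"
    and e f :: "nat \<Rightarrow> 'b \<Rightarrow> 'b option" and eb fb :: "'b \<Rightarrow> 'b option"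
  assumes "n \<ge> 1" and "finite B" and "q_crystal n B wt e f eb fb"
  shows "in_Gamma n (character n B wt)"
  unfolding in_Gamma_def in_Lambda_def
proof (intro conjI allI impI)
  fix x :: "nat \<Rightarrow> int" and \<sigma> :: "nat \<Rightarrow> nat"
  assume p: "\<sigma> permutes {1..n}"
  show "character n B wt (x \<circ> \<sigma>) = character n B wt x"
  proof (rule perm_closure[OF _ p])
    fix i and x :: "nat \<Rightarrow> int" assume i: "1 \<le> i" "i < n"
    then have "n \<ge> 2" by simp
    then have gl: "gl_crystal n B wt e f" using assms(3) unfolding q_crystal_def by blast
    show "character n B wt (x \<circ> Transposition.transpose i (Suc i)) = character n B wt x"
      by (rule adj_sym[OF gl assms(2) i])
  qed
next
  fix x :: "nat \<Rightarrow> int" and t :: int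
  assume "2 \<le> n"
  then show "character n B wt (x(1 := t, 2 := - t)) = character n B wt (x(1 := 0, 2 := 0))"
    by (rule gamma_part[OF assms(3) _ assms(2)])
qed

end
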